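(* Let $\mathbf g=(g_1,\dots,g_s)$, $Q=\mathcal Q(\mathbf g)$ and $J=\sqrt[\mathbb R]{\operatorname{supp}Q}$. Then for every $d\in\mathbb N$ there exists $k\ge d$ such that $J_d=J\cap\mathbb R[\mathbf X]_d\subseteq\overline{\mathcal Q_k(\mathbf g)}$, the closure being taken in $\mathbb R[\mathbf X]_k$.
   Context: $\mathbb R[\mathbf X]=\mathbb R[X_1,\dots,X_n]$, $\mathbb R[\mathbf X]_t$ polynomials of degree $\le t$ with Euclidean topology; $\Sigma^2$ sums of squares, $\Sigma^2_t=\Sigma^2\cap\mathbb R[\mathbf X]_t$. $\mathcal Q_t(\mathbf g)=\{s_0+\sum_js_jg_j:s_0\in\Sigma^2_t,s_j\in\Sigma^2,\deg s_j\le t-\deg g_j\}$, $\mathcal Q(\mathbf g)=\bigcup_t\mathcal Q_t(\mathbf g)$, $\operatorname{supp}Q=Q\cap(-Q)$, $\sqrt[\mathbb R]{I}=\{p:\exists m\in\mathbb N, s\in\Sigma^2,\ p^{2m}+s\in I\}$. *)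

theory Defs
  imports "HOL-Analysis.Analysis" "HOL-Library.Poly_Mapping"
begin

text \<open>Real polynomials in the variables indexed by the type 'v: a monomial is an
  exponent vector, a polynomial is a finitely supported coefficient map.\<close>
type_synonym 'v rpoly = "('v \<Rightarrow>\<^sub>0 nat) \<Rightarrow>\<^sub>0 real"

definition mon_deg :: "('v \<Rightarrow>\<^sub>0 nat) \<Rightarrow> nat" where
  "mon_deg m = (\<Sum>v\<in>Poly_Mapping.keys m. Poly_Mapping.lookup m v)"

text \<open>Total degree (the zero polynomial gets degree 0 here).\<close>
definition tdeg :: "'v rpoly \<Rightarrow> nat" where
  "tdeg p = Max (insert 0 (mon_deg ` Poly_Mapping.keys p))"

definition polys_upto :: "nat \<Rightarrow> 'v rpoly set" where
  "polys_upto t = {p. \<forall>m\<in>Poly_Mapping.keys p. mon_deg m \<le> t}"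

definition sos :: "'v rpoly set" where
  "sos = {p. \<exists>fs. p = sum_list (map (\<lambda>q. q * q) fs)}"

text \<open>Truncated quadratic module \<open>Q_t(g)\<close>; the condition on s_j expresses
  \<open>deg s_j \<le> t - deg g_j\<close> with the convention \<open>deg 0 = -\<infinity>\<close>.\<close>
definition qmod_trunc :: "'v rpoly list \<Rightarrow> nat \<Rightarrow> 'v rpoly set" where
  "qmod_trunc gs t = {s0 + (\<Sum>j<length gs. ss j * gs ! j) | s0 ss.
      s0 \<in> sos \<and> s0 \<in> polys_upto t \<and>
      (\<forall>j<length gs. ss j \<in> sos \<and> (ss j = 0 \<or> tdeg (ss j) + tdeg (gs ! j) \<le> t))}"

definition qmod :: "'v rpoly list \<Rightarrow> 'v rpoly set" where
  "qmod gs = (\<Union>t. qmod_trunc gs t)"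

definition supp :: "'v rpoly set \<Rightarrow> 'v rpoly set" where
  "supp Q = Q \<inter> uminus ` Q"

definition real_radical :: "'v rpoly set \<Rightarrow> 'v rpoly set" where
  "real_radical I = {p. \<exists>(m::nat) s. s \<in> sos \<and> p ^ (2 * m) + s \<in> I}"

text \<open>Closure of S taken inside \<open>\<real>[X]_k\<close> with its Euclidean topology: a polynomial
  is identified with its coefficient function; on \<open>\<real>[X]_k\<close> only finitely many
  coordinates are nonzero, so the product topology restricts to the Euclidean one.\<close>
definition closure_in_deg :: "nat \<Rightarrow> 'v rpoly set \<Rightarrow> 'v rpoly set" where
  "closure_in_deg k S = {p \<in> polys_upto k. Poly_Mapping.lookup p \<in> closure (Poly_Mapping.lookup ` (S \<inter> polys_upto k))}"

end

theory Submission
  imports Defs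
begin

definition const :: "real \<Rightarrow> 'v rpoly" where
  "const c = Poly_Mapping.single 0 c"

lemma const_add: "const (a + b) = const a + const b"
  by (simp add: const_def single_add)
lemma const_mult: "const (a * b) = const a * const b"
  by (simp add: const_def mult_single)
lemma const_one [simp]: "const 1 = 1"
  by (simp add: const_def)
lemma const_zero [simp]: "const 0 = 0"
  by (simp add: const_def)
lemma const_uminus: "const (- a) = - const a"
  by (simp add: const_def single_uminus)
lemma const_diff: "const (a - b) = const a - const b"
  by (simp add: const_def single_diff)

lemma mon_deg_add:
  fixes a b :: "'v::finite \<Rightarrow>\<^sub>0 nat"
  shows "mon_deg (a + b) = mon_deg a + mon_deg b"
proof -
  have md: "mon_deg m = (\<Sum>v\<in>UNIV. Poly_Mapping.lookup m v)" for m :: "'v \<Rightarrow>\<^sub>0 nat"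
    unfolding mon_deg_def by (rule sum.mono_neutral_left) (auto simp: in_keys_iff)
  show ?thesis by (simp add: md lookup_add sum.distrib)
qed

lemma mon_deg_zero [simp]: "mon_deg 0 = 0"
  by (simp add: mon_deg_def)

lemma PU_mono: "p \<in> polys_upto a \<Longrightarrow> a \<le> b \<Longrightarrow> p \<in> polys_upto b"
  by (auto simp: polys_upto_def)
lemma PU_add: "p \<in> polys_upto a \<Longrightarrow> q \<in> polys_upto a \<Longrightarrow> p + q \<in> polys_upto a"
  using keys_add[of p q] by (auto simp: polys_upto_def)
lemma PU_uminus: "p \<in> polys_upto a \<Longrightarrow> - p \<in> polys_upto a"
  by (auto simp: polys_upto_def)
lemma PU_diff: "p \<in> polys_upto a \<Longrightarrow> q \<in> polys_upto a \<Longrightarrow> p - q \<in> polys_upto a"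
  using PU_add[of p a "-q"] PU_uminus[of q a] by simp
lemma PU_zero [simp]: "0 \<in> polys_upto a"
  by (auto simp: polys_upto_def)
lemma PU_const: "const c \<in> polys_upto a"
  by (auto simp: polys_upto_def const_def)
lemma PU_one: "1 \<in> polys_upto a"
  using PU_const[of 1 a] by simp
lemma PU_mult:
  fixes p q :: "('v::finite) rpoly"
  shows "p \<in> polys_upto a \<Longrightarrow> q \<in> polys_upto b \<Longrightarrow> p * q \<in> polys_upto (a + b)"
  using keys_mult[of p q] by (fastforce simp: polys_upto_def mon_deg_add intro: add_mono)
lemma PU_power:
  fixes p :: "('v::finite) rpoly"
  shows "p \<in> polys_upto a \<Longrightarrow> p ^ n \<in> polys_upto (n * a)"
  by (induction n) (auto simp: PU_one dest: PU_mult)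

lemma tdeg_le_iff: "tdeg p \<le> t \<longleftrightarrow> p \<in> polys_upto t"
  by (auto simp: tdeg_def polys_upto_def)

lemma PU_tdeg: "p \<in> polys_upto (tdeg p)"
  using tdeg_le_iff by blast

lemma sos_square: "q * q \<in> sos"
  unfolding sos_def by (auto intro!: exI[of _ "[q]"])
lemma sos_zero: "0 \<in> sos"
  unfolding sos_def by (auto intro!: exI[of _ "[]"])
lemma sos_add: "a \<in> sos \<Longrightarrow> b \<in> sos \<Longrightarrow> a + b \<in> sos"
proof -
  assume "a \<in> sos" "b \<in> sos"
  then obtain fs gs where "a = sum_list (map (\<lambda>q. q * q) fs)" "b = sum_list (map (\<lambda>q. q * q) gs)"
    by (auto simp: sos_def)
  thus ?thesis unfolding sos_def by (auto intro!: exI[of _ "fs @ gs"])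
qed
lemma sos_mult_square: "s \<in> sos \<Longrightarrow> h * h * s \<in> sos"
proof -
  assume "s \<in> sos"
  then obtain fs where s: "s = sum_list (map (\<lambda>q. q * q) fs)" by (auto simp: sos_def)
  have "h * h * s = sum_list (map (\<lambda>q. q * q) (map ((*) h) fs))"
    unfolding s by (induction fs) (auto simp: algebra_simps)
  thus ?thesis unfolding sos_def by blast
qed
lemma const_sq: "c \<ge> 0 \<Longrightarrow> const c = const (sqrt c) * const (sqrt c)"
  by (simp add: const_mult[symmetric])
lemma sos_const_mult: "c \<ge> 0 \<Longrightarrow> s \<in> sos \<Longrightarrow> const c * s \<in> sos"
  using sos_mult_square[of s "const (sqrt c)"] const_sq[of c] by metis
lemma sos_const: "c \<ge> 0 \<Longrightarrow> const c \<in> sos"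
  using sos_const_mult[of c 1] sos_square[of 1] by simp

lemma QI:
  assumes "s0 \<in> sos" "s0 \<in> polys_upto K"
    "\<And>j. j < length gs \<Longrightarrow> ss j \<in> sos \<and> (ss j = 0 \<or> tdeg (ss j) + tdeg (gs ! j) \<le> K)"
  shows "s0 + (\<Sum>j<length gs. ss j * gs ! j) \<in> qmod_trunc gs K"
  unfolding qmod_trunc_def using assms by blast

lemma QE:
  assumes "q \<in> qmod_trunc gs K"
  obtains s0 ss where "q = s0 + (\<Sum>j<length gs. ss j * gs ! j)" "s0 \<in> sos" "s0 \<in> polys_upto K"
    "\<And>j. j < length gs \<Longrightarrow> ss j \<in> sos \<and> (ss j = 0 \<or> tdeg (ss j) + tdeg (gs ! j) \<le> K)"
  using assms unfolding qmod_trunc_def by blast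

lemma cond_add:
  assumes "a = 0 \<or> tdeg a + n \<le> K" "b = 0 \<or> tdeg b + n \<le> K"
  shows "a + b = 0 \<or> tdeg (a + b) + n \<le> K"
proof (cases "a = 0 \<or> b = 0")
  case True thus ?thesis using assms by auto
next
  case False
  hence "a \<in> polys_upto (K - n)" "b \<in> polys_upto (K - n)" "n \<le> K"
    using assms by (auto simp: tdeg_le_iff[symmetric])
  hence "a + b \<in> polys_upto (K - n)" by (intro PU_add)
  thus ?thesis using \<open>n \<le> K\<close> by (auto simp: tdeg_le_iff[symmetric])
qed

lemma cond_mult:
  fixes a h :: "('v::finite) rpoly"
  assumes "a = 0 \<or> tdeg a + n \<le> K" "h \<in> polys_upto D"
  shows "h * a = 0 \<or> tdeg (h * a) + n \<le> K + D"
proof (cases "a = 0")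
  case True thus ?thesis by auto
next
  case False
  hence "a \<in> polys_upto (K - n)" "n \<le> K"
    using assms by (auto simp: tdeg_le_iff[symmetric])
  hence "h * a \<in> polys_upto (D + (K - n))" using assms(2) by (intro PU_mult)
  thus ?thesis using \<open>n \<le> K\<close> by (auto simp: tdeg_le_iff[symmetric])
qed

lemma Q_mono:
  assumes "q \<in> qmod_trunc gs K" "K \<le> K'" shows "q \<in> qmod_trunc gs K'"
proof -
  obtain s0 ss where p: "q = s0 + (\<Sum>j<length gs. ss j * gs ! j)" "s0 \<in> sos" "s0 \<in> polys_upto K"
    "\<And>j. j < length gs \<Longrightarrow> ss j \<in> sos \<and> (ss j = 0 \<or> tdeg (ss j) + tdeg (gs ! j) \<le> K)"
    by (rule QE[OF assms(1)]) blast
  show ?thesis unfolding p(1)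
  proof (rule QI)
    show "s0 \<in> sos" by fact
    show "s0 \<in> polys_upto K'" using p(3) assms(2) by (rule PU_mono)
    fix j assume j: "j < length gs"
    show "ss j \<in> sos \<and> (ss j = 0 \<or> tdeg (ss j) + tdeg (gs ! j) \<le> K')"
      using p(4)[OF j] assms(2) by linarith
  qed
qed

lemma Q_add:
  assumes "p \<in> qmod_trunc gs K" "q \<in> qmod_trunc gs K"
  shows "p + q \<in> qmod_trunc gs K"
proof -
  obtain s0 ss where p: "p = s0 + (\<Sum>j<length gs. ss j * gs ! j)" "s0 \<in> sos" "s0 \<in> polys_upto K"
    "\<And>j. j < length gs \<Longrightarrow> ss j \<in> sos \<and> (ss j = 0 \<or> tdeg (ss j) + tdeg (gs ! j) \<le> K)"
    by (rule QE[OF assms(1)]) blast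
  obtain t0 tt where q: "q = t0 + (\<Sum>j<length gs. tt j * gs ! j)" "t0 \<in> sos" "t0 \<in> polys_upto K"
    "\<And>j. j < length gs \<Longrightarrow> tt j \<in> sos \<and> (tt j = 0 \<or> tdeg (tt j) + tdeg (gs ! j) \<le> K)"
    by (rule QE[OF assms(2)]) blast
  have "p + q = (s0 + t0) + (\<Sum>j<length gs. (ss j + tt j) * gs ! j)"
    unfolding p q by (simp add: algebra_simps sum.distrib)
  also have "\<dots> \<in> qmod_trunc gs K"
  proof (rule QI)
    show "s0 + t0 \<in> sos" using p q by (simp add: sos_add)
    show "s0 + t0 \<in> polys_upto K" using p q by (simp add: PU_add)
    fix j assume j: "j < length gs"
    show "ss j + tt j \<in> sos \<and> (ss j + tt j = 0 \<or> tdeg (ss j + tt j) + tdeg (gs ! j) \<le> K)"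
      using p(4)[OF j] q(4)[OF j] by (simp add: sos_add cond_add)
  qed
  finally show ?thesis .
qed

lemma Q_mult:
  fixes gs :: "('v::finite) rpoly list"
  assumes "q \<in> qmod_trunc gs K" "h \<in> sos" "h \<in> polys_upto D"
    "\<And>s. s \<in> sos \<Longrightarrow> h * s \<in> sos"
  shows "h * q \<in> qmod_trunc gs (K + D)"
proof -
  obtain s0 ss where p: "q = s0 + (\<Sum>j<length gs. ss j * gs ! j)" "s0 \<in> sos" "s0 \<in> polys_upto K"
    "\<And>j. j < length gs \<Longrightarrow> ss j \<in> sos \<and> (ss j = 0 \<or> tdeg (ss j) + tdeg (gs ! j) \<le> K)"
    by (rule QE[OF assms(1)]) blast
  have "h * q = h * s0 + (\<Sum>j<length gs. (h * ss j) * gs ! j)"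
    unfolding p by (simp add: algebra_simps sum_distrib_left)
  also have "\<dots> \<in> qmod_trunc gs (K + D)"
  proof (rule QI)
    show "h * s0 \<in> sos" using p assms by simp
    show "h * s0 \<in> polys_upto (K + D)" using PU_mult[OF assms(3) p(3)] by (simp add: add.commute)
    fix j assume j: "j < length gs"
    show "h * ss j \<in> sos \<and> (h * ss j = 0 \<or> tdeg (h * ss j) + tdeg (gs ! j) \<le> K + D)"
      using p(4)[OF j] assms(3,4) cond_mult[of "ss j" "tdeg (gs ! j)" K h D] by simp
  qed
  finally show ?thesis .
qed

lemma Q_scale:
  fixes gs :: "('v::finite) rpoly list"
  assumes "q \<in> qmod_trunc gs K" "c \<ge> 0"
  shows "const c * q \<in> qmod_trunc gs K"
proof -
  have "const c * q \<in> qmod_trunc gs (K + 0)"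
    by (rule Q_mult[OF assms(1) sos_const[OF assms(2)] PU_const[of c 0]]) (rule sos_const_mult[OF assms(2)])
  thus ?thesis by simp
qed

lemma Q_mult_sq:
  fixes gs :: "('v::finite) rpoly list"
  assumes "q \<in> qmod_trunc gs K" "h \<in> polys_upto D"
  shows "h * h * q \<in> qmod_trunc gs (K + 2 * D)"
proof -
  have "h * h * q \<in> qmod_trunc gs (K + (D + D))"
    by (rule Q_mult[OF assms(1) sos_square[of h] PU_mult[OF assms(2) assms(2)]])
       (simp add: sos_mult_square mult.assoc[symmetric])
  thus ?thesis by (simp add: mult_2 mult.assoc)
qed

lemma Q_sos:
  assumes "s \<in> sos" "s \<in> polys_upto K"
  shows "s \<in> qmod_trunc gs K"
  using QI[OF assms, of gs "\<lambda>_. 0"] sos_zero by simp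

lemma const_numeral [simp]: "const (numeral n) = numeral n"
  by (simp add: const_def)

lemma cert:
  fixes p :: "'v rpoly"
  assumes "1 \<le> m"
  shows "\<forall>\<epsilon>>0. \<forall>a\<ge>0. \<exists>c\<ge>0. const \<epsilon> - const a * p^2 + const c * p^(2*m) \<in> sos"
  using assms
proof (induction m rule: nat_induct_at_least)
  case base
  show ?case
  proof (intro allI impI)
    fix \<epsilon> a :: real assume "\<epsilon> > 0" "a \<ge> 0"
    thus "\<exists>c\<ge>0. const \<epsilon> - const a * p^2 + const c * p^(2*1) \<in> sos"
      by (intro exI[of _ a]) (simp add: sos_const)
  qed
next
  case (Suc m)
  show ?case
  proof (intro allI impI)
    fix \<epsilon> a :: real assume e: "\<epsilon> > 0" and a: "a \<ge> 0"
    define a' where "a' = (1 + a)^2 / (4 * \<epsilon>)"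
    define b where "b = 2 * \<epsilon> / (1 + a)"
    have a'pos: "a' > 0" using e a by (simp add: a'_def)
    have f1: "2 * a' * b = 1 + a" using e a unfolding a'_def b_def
      by (simp add: power2_eq_square field_split_simps) (smt (verit) mult_nonneg_nonneg mult_pos_pos)
    have f2: "a' * b * b = \<epsilon>" using e a unfolding a'_def b_def
      by (simp add: power2_eq_square field_split_simps) (smt (verit) mult_nonneg_nonneg mult_pos_pos)
    obtain C where C: "C \<ge> 0" "const 1 - const a' * p^2 + const C * p^(2*m) \<in> sos"
      using Suc.IH[rule_format, of 1 a'] a'pos by auto
    have s1: "p * p * (const 1 - const a' * p^2 + const C * p^(2*m)) \<in> sos"
      using C(2) by (rule sos_mult_square)
    have s2: "const a' * ((p^2 - const b) * (p^2 - const b)) \<in> sos"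
      using a'pos by (intro sos_const_mult sos_square) auto
    have e1: "const a' * ((p^2 - const b) * (p^2 - const b))
        = const a' * p^4 - const (2 * a' * b) * p^2 + const (a' * b * b)"
      by (simp add: const_mult algebra_simps power2_eq_square power4_eq_xxxx)
    have "p * p * (const 1 - const a' * p^2 + const C * p^(2*m)) + const a' * ((p^2 - const b) * (p^2 - const b))
        = const \<epsilon> - const a * p^2 + const C * p^(2 * Suc m)"
      unfolding e1 f1 f2 by (simp add: const_add algebra_simps power2_eq_square power4_eq_xxxx power_add)
    thus "\<exists>c\<ge>0. const \<epsilon> - const a * p^2 + const c * p^(2 * Suc m) \<in> sos"
      using s1 s2 C(1) by (metis sos_add)
  qed
qed

lemma cert2:
  fixes p :: "'v rpoly"
  assumes "1 \<le> m" "\<epsilon> > 0"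
  shows "\<exists>c\<ge>0. const \<epsilon> + p + const c * p^(2*m) \<in> sos"
proof -
  obtain c where c: "c \<ge> 0" "const (\<epsilon>/2) - const (1/(2*\<epsilon>)) * p^2 + const c * p^(2*m) \<in> sos"
  proof -
    have "\<exists>c\<ge>0. const (\<epsilon>/2) - const (1/(2*\<epsilon>)) * p^2 + const c * p^(2*m) \<in> sos"
      using cert[OF assms(1), of p] assms(2) by simp
    thus ?thesis using that by blast
  qed
  have sq: "const (\<epsilon>/2) * ((1 + const (1/\<epsilon>) * p) * (1 + const (1/\<epsilon>) * p)) \<in> sos"
    using assms by (intro sos_const_mult sos_square) auto
  have "const (\<epsilon>/2) * const (1/\<epsilon>) * const 2 = (const 1 :: 'v rpoly)"
    using assms by (simp only: const_mult[symmetric]) simp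
  hence g1: "const (\<epsilon>/2) * const (1/\<epsilon>) * 2 = (1 :: 'v rpoly)" by simp
  have g2: "const (\<epsilon>/2) * const (1/\<epsilon>) * const (1/\<epsilon>) = (const (1/(2*\<epsilon>)) :: 'v rpoly)"
    using assms by (simp add: const_mult[symmetric])
  have e: "const (\<epsilon>/2) * ((1 + const (1/\<epsilon>) * p) * (1 + const (1/\<epsilon>) * p))
     = const (\<epsilon>/2) + (const (\<epsilon>/2) * const (1/\<epsilon>) * 2) * p
       + (const (\<epsilon>/2) * const (1/\<epsilon>) * const (1/\<epsilon>)) * p^2"
    by (simp add: algebra_simps power2_eq_square)
  have h: "const (\<epsilon>/2) + const (\<epsilon>/2) = (const \<epsilon> :: 'v rpoly)"
    by (simp add: const_add[symmetric])
  have "const (\<epsilon>/2) * ((1 + const (1/\<epsilon>) * p) * (1 + const (1/\<epsilon>) * p))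
      + (const (\<epsilon>/2) - const (1/(2*\<epsilon>)) * p^2 + const c * p^(2*m))
      = const \<epsilon> + p + const c * p^(2*m)"
    unfolding e g1 g2 h[symmetric] by (simp add: algebra_simps)
  thus ?thesis using sos_add[OF sq c(2)] c(1) by metis
qed

definition Aset :: "'v rpoly list \<Rightarrow> nat \<Rightarrow> 'v rpoly set" where
  "Aset gs K = {p. \<forall>\<epsilon>>0. p + const \<epsilon> \<in> qmod_trunc gs K}"

lemma elem:
  fixes gs :: "('v::finite) rpoly list"
  assumes "p \<in> real_radical (supp (qmod gs))" "p \<in> polys_upto D"
  shows "\<exists>K. \<forall>K'\<ge>K. p \<in> Aset gs K'"
proof -
  obtain m s where ms: "s \<in> sos" "p^(2*m) + s \<in> supp (qmod gs)"
    using assms(1) by (auto simp: real_radical_def)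
  then obtain q where q: "q \<in> qmod gs" "p^(2*m) + s = - q" by (auto simp: supp_def)
  obtain K1 where K1: "q \<in> qmod_trunc gs K1" using q(1) by (auto simp: qmod_def)
  have sQ: "s \<in> qmod_trunc gs (tdeg s)" by (rule Q_sos[OF ms(1) PU_tdeg])
  have "q = -(p^(2*m) + s)" using q(2) by simp
  hence eq: "-(p^(2*m)) = q + s" by simp
  have "q + s \<in> qmod_trunc gs (max K1 (tdeg s))"
    by (rule Q_add[OF Q_mono[OF K1] Q_mono[OF sQ]]) simp_all
  hence "p * p * (-(p^(2*m))) \<in> qmod_trunc gs (max K1 (tdeg s) + 2 * D)"
    unfolding eq by (rule Q_mult_sq[OF _ assms(2)])
  moreover have "p * p * (-(p^(2*m))) = -(p^(2*Suc m))"
    by (simp add: power_add power2_eq_square algebra_simps)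
  ultimately have M: "-(p^(2*Suc m)) \<in> qmod_trunc gs (max K1 (tdeg s) + 2 * D)" by (simp only:)
  define K where "K = max (max K1 (tdeg s) + 2 * D) (2 * Suc m * D)"
  have "\<forall>K'\<ge>K. p \<in> Aset gs K'"
  proof (intro allI impI)
    fix K' assume K': "K \<le> K'"
    show "p \<in> Aset gs K'"
      unfolding Aset_def
    proof (intro CollectI allI impI)
      fix \<epsilon> :: real assume e: "\<epsilon> > 0"
      obtain c where c: "c \<ge> 0" "const \<epsilon> + p + const c * p^(2*Suc m) \<in> sos"
        using cert2[of "Suc m" \<epsilon> p] e by auto
      have D1: "p \<in> polys_upto (2 * Suc m * D)"
        using assms(2) by (rule PU_mono) simp
      have D2: "const c * p^(2*Suc m) \<in> polys_upto (2 * Suc m * D)"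
        using PU_mult[OF PU_const[of c 0] PU_power[OF assms(2), of "2 * Suc m"]] by simp
      have "const \<epsilon> + p + const c * p^(2*Suc m) \<in> polys_upto (2 * Suc m * D)"
        by (intro PU_add PU_const D1 D2)
      hence "const \<epsilon> + p + const c * p^(2*Suc m) \<in> polys_upto K'"
        by (rule PU_mono) (use K' in \<open>simp add: K_def\<close>)
      hence s1: "const \<epsilon> + p + const c * p^(2*Suc m) \<in> qmod_trunc gs K'"
        by (rule Q_sos[OF c(2)])
      have "-(p^(2*Suc m)) \<in> qmod_trunc gs K'"
        by (rule Q_mono[OF M]) (use K' in \<open>simp add: K_def\<close>)
      hence s2: "const c * (-(p^(2*Suc m))) \<in> qmod_trunc gs K'"
        by (rule Q_scale[OF _ c(1)])
      have "p + const \<epsilon> = (const \<epsilon> + p + const c * p^(2*Suc m)) + const c * (-(p^(2*Suc m)))"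
        by (simp add: algebra_simps)
      thus "p + const \<epsilon> \<in> qmod_trunc gs K'" using Q_add[OF s1 s2] by (simp only:)
    qed
  qed
  thus ?thesis by blast
qed

lemma Aset_mono: "p \<in> Aset gs K \<Longrightarrow> K \<le> K' \<Longrightarrow> p \<in> Aset gs K'"
  unfolding Aset_def using Q_mono by blast

lemma Aset_add: "p \<in> Aset gs K \<Longrightarrow> q \<in> Aset gs K \<Longrightarrow> p + q \<in> Aset gs K"
  unfolding Aset_def
proof (intro CollectI allI impI)
  fix \<epsilon> :: real assume p: "p \<in> {p. \<forall>\<epsilon>>0. p + const \<epsilon> \<in> qmod_trunc gs K}"
    and q: "q \<in> {p. \<forall>\<epsilon>>0. p + const \<epsilon> \<in> qmod_trunc gs K}" and e: "\<epsilon> > 0"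
  have "(p + const (\<epsilon>/2)) + (q + const (\<epsilon>/2)) \<in> qmod_trunc gs K"
    by (rule Q_add) (use p q e in auto)
  moreover have "(p + const (\<epsilon>/2)) + (q + const (\<epsilon>/2)) = p + q + const \<epsilon>"
    by (simp add: algebra_simps const_add[symmetric])
  ultimately show "p + q + const \<epsilon> \<in> qmod_trunc gs K" by simp
qed

lemma Aset_scale:
  fixes gs :: "('v::finite) rpoly list"
  assumes "p \<in> Aset gs K" "c \<ge> 0"
  shows "const c * p \<in> Aset gs K"
  unfolding Aset_def
proof (intro CollectI allI impI)
  fix \<epsilon> :: real assume e: "\<epsilon> > 0"
  show "const c * p + const \<epsilon> \<in> qmod_trunc gs K"
  proof (cases "c = 0")
    case True
    thus ?thesis using e Q_sos[OF sos_const PU_const, of \<epsilon> gs K] by simp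
  next
    case False
    hence c: "c > 0" using assms(2) by simp
    have "const c * (p + const (\<epsilon> / c)) \<in> qmod_trunc gs K"
      using assms c e by (intro Q_scale) (auto simp: Aset_def)
    moreover have "const c * (p + const (\<epsilon> / c)) = const c * p + const \<epsilon>"
      using c by (simp add: algebra_simps const_mult[symmetric])
    ultimately show ?thesis by simp
  qed
qed

lemma Aset_zero:
  fixes gs :: "('v::finite) rpoly list"
  shows "0 \<in> Aset gs K"
  unfolding Aset_def by (auto intro: Q_sos[OF sos_const PU_const])

interpretation PV: vector_space "\<lambda>c (p::'v rpoly). const c * p"
  by unfold_locales (auto simp: algebra_simps const_add const_mult)

lemma W_subspace:
  fixes gs :: "('v::finite) rpoly list"
  shows "PV.subspace {x. x \<in> Aset gs K \<and> -x \<in> Aset gs K}"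
  unfolding PV.subspace_def
proof (intro conjI ballI allI)
  show "0 \<in> {x. x \<in> Aset gs K \<and> - x \<in> Aset gs K}" using Aset_zero by simp
next
  fix x y assume "x \<in> {x. x \<in> Aset gs K \<and> - x \<in> Aset gs K}" "y \<in> {x. x \<in> Aset gs K \<and> - x \<in> Aset gs K}"
  thus "x + y \<in> {x. x \<in> Aset gs K \<and> - x \<in> Aset gs K}"
    using Aset_add[of x gs K y] Aset_add[of "-x" gs K "-y"] by (simp add: add.commute)
next
  fix c :: real and x assume x: "x \<in> {x. x \<in> Aset gs K \<and> - x \<in> Aset gs K}"
  show "const c * x \<in> {x. x \<in> Aset gs K \<and> - x \<in> Aset gs K}"
  proof (cases "c \<ge> 0")
    case True
    have "-(const c * x) = const c * (-x)" by simp
    thus ?thesis using x True Aset_scale[of x gs K c] Aset_scale[of "-x" gs K c] by simp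
  next
    case False
    have e1: "const c * x = const (-c) * (-x)" by (simp add: const_uminus)
    have e2: "-(const c * x) = const (-c) * x" by (simp add: const_uminus)
    show ?thesis using x False Aset_scale[of x gs K "-c"] Aset_scale[of "-x" gs K "-c"]
      unfolding e1 e2[symmetric] by simp
  qed
qed

lemma lookup_le_mon_deg: "Poly_Mapping.lookup m v \<le> mon_deg m"
  unfolding mon_deg_def
  by (cases "v \<in> Poly_Mapping.keys m") (auto intro: member_le_sum simp: in_keys_iff)

lemma finite_mons:
  "finite {m :: ('v::finite) \<Rightarrow>\<^sub>0 nat. mon_deg m \<le> d}"
proof -
  have "Poly_Mapping.lookup ` {m :: 'v \<Rightarrow>\<^sub>0 nat. mon_deg m \<le> d} \<subseteq> (\<Pi>\<^sub>E v \<in> UNIV. {..d})"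
    using lookup_le_mon_deg order_trans by fastforce
  moreover have "finite (\<Pi>\<^sub>E v \<in> (UNIV :: 'v set). {..d})"
    by (intro finite_PiE) auto
  ultimately have "finite (Poly_Mapping.lookup ` {m :: 'v \<Rightarrow>\<^sub>0 nat. mon_deg m \<le> d})"
    by (rule finite_subset)
  moreover have "inj_on Poly_Mapping.lookup {m :: 'v \<Rightarrow>\<^sub>0 nat. mon_deg m \<le> d}"
    by (rule inj_onI) (simp add: poly_mapping_eqI)
  ultimately show ?thesis by (rule finite_imageD)
qed

lemma poly_expand: "p = (\<Sum>m\<in>Poly_Mapping.keys p. Poly_Mapping.single m (Poly_Mapping.lookup p m))"
proof (rule poly_mapping_eqI)
  fix k
  show "Poly_Mapping.lookup p k = Poly_Mapping.lookup (\<Sum>m\<in>Poly_Mapping.keys p. Poly_Mapping.single m (Poly_Mapping.lookup p m)) k"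
    unfolding lookup_sum lookup_single
    by (cases "k \<in> Poly_Mapping.keys p") (auto simp: when_def in_keys_iff)
qed

lemma PU_span:
  fixes p :: "('v::finite) rpoly"
  assumes "p \<in> polys_upto d"
  shows "p \<in> PV.span ((\<lambda>m. Poly_Mapping.single m 1) ` {m. mon_deg m \<le> d})"
proof -
  have "(\<Sum>m\<in>Poly_Mapping.keys p. Poly_Mapping.single m (Poly_Mapping.lookup p m))
        \<in> PV.span ((\<lambda>m. Poly_Mapping.single m 1) ` {m. mon_deg m \<le> d})"
  proof (rule PV.span_sum)
    fix m assume m: "m \<in> Poly_Mapping.keys p"
    have "Poly_Mapping.single m 1 \<in> PV.span ((\<lambda>m. Poly_Mapping.single m (1::real)) ` {m. mon_deg m \<le> d})"
      using m assms by (intro PV.span_base) (auto simp: polys_upto_def)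
    hence "const (Poly_Mapping.lookup p m) * Poly_Mapping.single m 1
        \<in> PV.span ((\<lambda>m. Poly_Mapping.single m 1) ` {m. mon_deg m \<le> d})"
      by (rule PV.span_scale)
    thus "Poly_Mapping.single m (Poly_Mapping.lookup p m)
        \<in> PV.span ((\<lambda>m. Poly_Mapping.single m 1) ` {m. mon_deg m \<le> d})"
      by (simp add: const_def mult_single)
  qed
  thus ?thesis using poly_expand[of p] by simp
qed

lemma Aset_closure:
  assumes "p \<in> Aset gs K" "p \<in> polys_upto K"
  shows "p \<in> closure_in_deg K (qmod_trunc gs K)"
  unfolding closure_in_deg_def
proof (intro CollectI conjI)
  show "p \<in> polys_upto K" by fact
  define f where "f t = Poly_Mapping.lookup (p + const t)" for t
  have f: "f t = (\<lambda>m. Poly_Mapping.lookup p m + t * (if m = 0 then 1 else 0))" for t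
    by (auto simp: f_def lookup_add const_def lookup_single when_def)
  have "continuous_on UNIV f"
    unfolding f by (intro continuous_on_coordinatewise_then_product continuous_intros) 
  hence "(f \<longlongrightarrow> f 0) (at 0 within UNIV)"
    by (simp add: continuous_on_def)
  hence "(f \<longlongrightarrow> f 0) (at 0 within {0<..})"
    by (rule tendsto_within_subset) simp
  moreover have "f 0 = Poly_Mapping.lookup p" by (simp add: f_def)
  ultimately have lim: "(f \<longlongrightarrow> Poly_Mapping.lookup p) (at_right 0)" by simp
  have ev: "\<forall>\<^sub>F t in at_right 0. f t \<in> Poly_Mapping.lookup ` (qmod_trunc gs K \<inter> polys_upto K)"
    using eventually_at_right_less
  proof (rule eventually_mono)
    fix t :: real assume "0 < t"
    hence "p + const t \<in> qmod_trunc gs K \<inter> polys_upto K"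
      using assms by (auto simp: Aset_def intro: PU_add PU_const)
    thus "f t \<in> Poly_Mapping.lookup ` (qmod_trunc gs K \<inter> polys_upto K)"
      unfolding f_def by blast
  qed
  have ev2: "\<forall>\<^sub>F t in at_right 0. f t \<in> closure (Poly_Mapping.lookup ` (qmod_trunc gs K \<inter> polys_upto K))"
    using ev by (rule eventually_mono) (meson closure_subset subsetD)
  show "Poly_Mapping.lookup p \<in> closure (Poly_Mapping.lookup ` (qmod_trunc gs K \<inter> polys_upto K))"
    by (rule Lim_in_closed_set[OF closed_closure ev2 _ lim]) simp
qed

theorem mainTheorem12:
  fixes gs :: "('v::finite) rpoly list"
  shows "\<forall>d::nat. \<exists>k\<ge>d.
           real_radical (supp (qmod gs)) \<inter> polys_upto d
             \<subseteq> closure_in_deg k (qmod_trunc gs k)"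
proof
  fix d :: nat
  define V where "V = real_radical (supp (qmod gs)) \<inter> polys_upto d"
  obtain B where B: "B \<subseteq> V" "PV.independent B" "V \<subseteq> PV.span B"
    by (rule PV.maximal_independent_subset)
  have "B \<subseteq> PV.span ((\<lambda>m. Poly_Mapping.single m 1) ` {m. mon_deg m \<le> d})"
  proof
    fix b assume "b \<in> B"
    hence "b \<in> polys_upto d" using B(1) by (simp add: V_def subset_iff)
    thus "b \<in> PV.span ((\<lambda>m. Poly_Mapping.single m 1) ` {m. mon_deg m \<le> d})" by (rule PU_span)
  qed
  hence finB: "finite B"
    by (rule PV.independent_span_bound[OF finite_imageI[OF finite_mons] B(2), THEN conjunct1])
  have "\<forall>b\<in>B. \<exists>K. \<forall>K'\<ge>K. b \<in> Aset gs K' \<and> -b \<in> Aset gs K'"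
  proof
    fix b assume "b \<in> B"
    hence b: "b \<in> real_radical (supp (qmod gs))" "b \<in> polys_upto d" using B(1) by (auto simp: V_def)
    have pm: "(-b) ^ (2 * m) = b ^ (2 * m)" for m
      by (simp add: power_mult)
    obtain m s where "s \<in> sos" "b ^ (2 * m) + s \<in> supp (qmod gs)"
      using b(1) unfolding real_radical_def by blast
    hence nb: "-b \<in> real_radical (supp (qmod gs))"
      unfolding real_radical_def pm[symmetric] by blast
    obtain K1 where K1: "\<forall>K'\<ge>K1. b \<in> Aset gs K'" using elem[OF b] by blast
    obtain K2 where K2: "\<forall>K'\<ge>K2. -b \<in> Aset gs K'" using elem[OF nb PU_uminus[OF b(2)]] by blast
    show "\<exists>K. \<forall>K'\<ge>K. b \<in> Aset gs K' \<and> -b \<in> Aset gs K'"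
      using K1 K2 by (intro exI[of _ "max K1 K2"]) auto
  qed
  from bchoice[OF this] obtain Kf where Kf0: "\<forall>b\<in>B. \<forall>K'\<ge>Kf b. b \<in> Aset gs K' \<and> -b \<in> Aset gs K'"
    by blast
  have Kf: "\<And>b K'. b \<in> B \<Longrightarrow> K' \<ge> Kf b \<Longrightarrow> b \<in> Aset gs K' \<and> -b \<in> Aset gs K'"
    using Kf0 by blast
  define K where "K = d + (\<Sum>b\<in>B. Kf b)"
  have "B \<subseteq> {x. x \<in> Aset gs K \<and> -x \<in> Aset gs K}"
  proof
    fix b assume b: "b \<in> B"
    have "Kf b \<le> (\<Sum>b\<in>B. Kf b)" by (rule member_le_sum[OF b _ finB]) simp
    hence "Kf b \<le> K" by (simp add: K_def)
    thus "b \<in> {x. x \<in> Aset gs K \<and> -x \<in> Aset gs K}" using Kf[OF b] by simp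
  qed
  hence "PV.span B \<subseteq> {x. x \<in> Aset gs K \<and> -x \<in> Aset gs K}"
    using W_subspace by (rule PV.span_minimal)
  hence VA: "V \<subseteq> Aset gs K" using B(3) by blast
  have "V \<subseteq> closure_in_deg K (qmod_trunc gs K)"
  proof
    fix p assume p: "p \<in> V"
    hence "p \<in> polys_upto d" by (simp add: V_def)
    hence "p \<in> polys_upto K" by (rule PU_mono) (simp add: K_def)
    thus "p \<in> closure_in_deg K (qmod_trunc gs K)" using VA p Aset_closure by blast
  qed
  moreover have "d \<le> K" by (simp add: K_def)
  ultimately show "\<exists>k\<ge>d. real_radical (supp (qmod gs)) \<inter> polys_upto d
             \<subseteq> closure_in_deg k (qmod_trunc gs k)" unfolding V_def by (intro exI[of _ K] conjI)
qed

end
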